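(* Let $a,b$ be positive integers (neither assumed prime or square-free). Let $f$ be a reduced form of discriminant $-4a^2b$ whose class in $C(-4a^2b)$ is derived from the class of $e_{-4b}=(1,0,b)$ in $C(-4b)$, and suppose $f$ is not equivalent to $(1,0,a^2b)$. Among the positive divisors $a_2$ of $a$ such that the class of $f$ is derived from the class of $(1,0,(a/a_2)^2b)$ in $C(-4(a/a_2)^2b)$, choose one for which $b_2=(a/a_2)^2b$ is maximal. If $b_2>a_2^2$, then \[ f=(a_2^2,\;2a_2k,\;k^2+b_2) \] for some integer $k$ with $-a_2/2\le k\le a_2/2$.
   Context: A binary quadratic form $(a,b,c)$ means $ax^2+bxy+cy^2$ with integer coefficients and discriminant $b^2-4ac$; primitive means $\gcd(a,b,c)=1$. Two forms are equivalent if one is obtained from the other by an integer substitution of determinant $1$. A form $(a,b,c)$ of negative discriminant is reduced if $|b|\le a\le c$, and $b\ge0$ whenever $|b|=a$ or $a=c$; every positive definite form is equivalent to a unique reduced form. For $\Delta<0$, $C(\Delta)$ is the class group of equivalence classes of primitive positive definite forms of discriminant $\Delta$ under composition. For a positive integer $s$, a class $f\in C(\Delta s^2)$ is derived from a class $g\in C(\Delta)$ if there exist a representative $g_0$ of $g$ and an integer matrix $\begin{pmatrix}\alpha&\beta\\ \gamma&\delta\end{pmatrix}$ of determinant $s$ such that the form $g_0(\alpha x+\beta y,\gamma x+\delta y)$ lies in the class $f$. *)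

theory Defs
  imports Main
begin

text \<open>A binary quadratic form (a,b,c) stands for a x^2 + b x y + c y^2.\<close>
type_synonym bqf = "int \<times> int \<times> int"

definition disc :: "bqf \<Rightarrow> int" where
  "disc f = (case f of (a, b, c) \<Rightarrow> b^2 - 4*a*c)"

definition primitive :: "bqf \<Rightarrow> bool" where
  "primitive f = (case f of (a, b, c) \<Rightarrow> gcd a (gcd b c) = 1)"

definition pos_def :: "bqf \<Rightarrow> bool" where
  "pos_def f = (case f of (a, b, c) \<Rightarrow> a > 0 \<and> b^2 - 4*a*c < 0)"

text \<open>The form g(\<alpha> x + \<beta> y, \<gamma> x + \<delta> y).\<close>
definition subst :: "bqf \<Rightarrow> int \<Rightarrow> int \<Rightarrow> int \<Rightarrow> int \<Rightarrow> bqf" where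
  "subst f \<alpha> \<beta> \<gamma> \<delta> = (case f of (a, b, c) \<Rightarrow>
     (a*\<alpha>^2 + b*\<alpha>*\<gamma> + c*\<gamma>^2,
      2*a*\<alpha>*\<beta> + b*(\<alpha>*\<delta> + \<beta>*\<gamma>) + 2*c*\<gamma>*\<delta>,
      a*\<beta>^2 + b*\<beta>*\<delta> + c*\<delta>^2))"

definition equiv_bqf :: "bqf \<Rightarrow> bqf \<Rightarrow> bool" where
  "equiv_bqf f g = (\<exists>\<alpha> \<beta> \<gamma> \<delta>. \<alpha>*\<delta> - \<beta>*\<gamma> = 1 \<and> subst f \<alpha> \<beta> \<gamma> \<delta> = g)"

definition reduced :: "bqf \<Rightarrow> bool" where
  "reduced f = (case f of (a, b, c) \<Rightarrow>
     \<bar>b\<bar> \<le> a \<and> a \<le> c \<and> ((\<bar>b\<bar> = a \<or> a = c) \<longrightarrow> b \<ge> 0))"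

text \<open>The class of f (in C(\<Delta> s^2)) is derived from the class of g (in C(\<Delta>)):
  some representative g0 of the class of g, transformed by an integer matrix of
  determinant s, lies in the class of f.\<close>
definition derived_from :: "bqf \<Rightarrow> bqf \<Rightarrow> int \<Rightarrow> bool" where
  "derived_from f g s = (\<exists>g0. equiv_bqf g g0 \<and>
     (\<exists>\<alpha> \<beta> \<gamma> \<delta>. \<alpha>*\<delta> - \<beta>*\<gamma> = s \<and> equiv_bqf (subst g0 \<alpha> \<beta> \<gamma> \<delta>) f))"

end

theory Submission
  imports Defs
begin


lemma subst_comp:
  "subst (subst f a1 b1 c1 d1) a2 b2 c2 d2 =
   subst f (a1*a2+b1*c2) (a1*b2+b1*d2) (c1*a2+d1*c2) (c1*b2+d1*d2)"
proof (cases f)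
  case (fields a b c)
  show ?thesis unfolding fields subst_def
    by (simp add: power2_eq_square algebra_simps)
qed

lemma subst_id: "subst f 1 0 0 1 = f"
  by (cases f) (simp add: subst_def)

lemma disc_subst:
  "disc (subst f a1 b1 c1 d1) = (a1*d1-b1*c1)^2 * disc f"
proof (cases f)
  case (fields a b c)
  show ?thesis unfolding fields subst_def disc_def
    by (simp add: power2_eq_square algebra_simps)
qed

lemma sq_ge1: "(x::int) \<noteq> 0 \<Longrightarrow> x^2 \<ge> 1"
proof -
  assume "x \<noteq> 0"
  hence "\<bar>x\<bar> \<ge> 1" by simp
  hence "\<bar>x\<bar>*\<bar>x\<bar> \<ge> 1*1" by (intro mult_mono) auto
  thus ?thesis by (simp add: power2_eq_square abs_mult[symmetric])
qed

lemma mul_ge: "(c::int) \<ge> 0 \<Longrightarrow> y \<ge> 1 \<Longrightarrow> c*y \<ge> c"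
  using mult_left_mono[of 1 y c] by simp

lemma mul_le: "(c::int) \<ge> 0 \<Longrightarrow> y \<le> -1 \<Longrightarrow> c*y \<le> -c"
  using mul_ge[of c "-y"] by simp

lemma lb_both:
  fixes a b c x y :: int
  assumes "\<bar>b\<bar> \<le> a" "a \<le> c" "x \<noteq> 0" "y \<noteq> 0"
  shows "a*x^2 + b*x*y + c*y^2 \<ge> a - \<bar>b\<bar> + c"
proof -
  have x1: "x^2 \<ge> 1" using assms(3) by (rule sq_ge1)
  have y1: "y^2 \<ge> 1" using assms(4) by (rule sq_ge1)
  have "\<bar>b*x*y\<bar> = \<bar>b\<bar>*(\<bar>x\<bar>*\<bar>y\<bar>)" by (simp add: abs_mult)
  hence bxy: "b*x*y \<ge> -(\<bar>b\<bar>*(\<bar>x\<bar>*\<bar>y\<bar>))" by (metis abs_ge_minus_self minus_le_iff)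
  have c0: "c \<ge> 0" "a - \<bar>b\<bar> \<ge> 0" "c - \<bar>b\<bar> \<ge> 0" "a \<ge> 0" using assms by auto
  show ?thesis
  proof (cases "\<bar>y\<bar> \<le> \<bar>x\<bar>")
    case True
    have "\<bar>x\<bar>*\<bar>y\<bar> \<le> \<bar>x\<bar>*\<bar>x\<bar>" using True by (intro mult_left_mono) auto
    hence "\<bar>x\<bar>*\<bar>y\<bar> \<le> x^2" by (simp add: power2_eq_square abs_mult[symmetric])
    hence "\<bar>b\<bar>*(\<bar>x\<bar>*\<bar>y\<bar>) \<le> \<bar>b\<bar>*x^2" by (intro mult_left_mono) auto
    moreover have "(a-\<bar>b\<bar>)*x^2 \<ge> a-\<bar>b\<bar>" using x1 c0 by (intro mul_ge)
    moreover have "c*y^2 \<ge> c" using y1 c0 by (intro mul_ge)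
    ultimately show ?thesis using bxy by (simp add: algebra_simps)
  next
    case False
    have "\<bar>x\<bar>*\<bar>y\<bar> \<le> \<bar>y\<bar>*\<bar>y\<bar>" using False by (intro mult_right_mono) auto
    hence "\<bar>x\<bar>*\<bar>y\<bar> \<le> y^2" by (simp add: power2_eq_square abs_mult[symmetric])
    hence "\<bar>b\<bar>*(\<bar>x\<bar>*\<bar>y\<bar>) \<le> \<bar>b\<bar>*y^2" by (intro mult_left_mono) auto
    moreover have "(c-\<bar>b\<bar>)*y^2 \<ge> c-\<bar>b\<bar>" using y1 c0 by (intro mul_ge)
    moreover have "a*x^2 \<ge> a" using x1 c0 by (intro mul_ge)
    ultimately show ?thesis using bxy by (simp add: algebra_simps)
  qed
qed

lemma lb_gen:
  fixes a b c x y :: int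
  assumes "\<bar>b\<bar> \<le> a" "a \<le> c" "0 < a" "(x,y) \<noteq> (0,0)"
  shows "a*x^2 + b*x*y + c*y^2 \<ge> a"
proof (cases "x = 0")
  case True
  then have "y \<noteq> 0" using assms by auto
  hence "y^2 \<ge> 1" by (rule sq_ge1)
  hence "c*y^2 \<ge> c" using assms by (intro mul_ge) auto
  hence "a \<le> c*y^2" using assms(2) by linarith
  thus ?thesis using True by simp
next
  case False
  show ?thesis
  proof (cases "y = 0")
    case True
    have "x^2 \<ge> 1" using False by (rule sq_ge1)
    hence "a*x^2 \<ge> a" using assms by (intro mul_ge) auto
    thus ?thesis using True by simp
  next
    case False2: False
    from lb_both[OF assms(1,2) False False2] show ?thesis using assms by linarith
  qed
qed

lemma gen_lem:
  fixes a b b' s t :: int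
  assumes "b' = b + 2*t" "s \<ge> 1 \<Longrightarrow> t \<ge> a" "s \<le> -1 \<Longrightarrow> t \<le> -a"
    "\<bar>b\<bar> \<le> a" "\<bar>b\<bar> = a \<or> a = c \<longrightarrow> 0 \<le> b"
    "\<bar>b'\<bar> \<le> a" "\<bar>b'\<bar> = a \<or> a = c' \<longrightarrow> 0 \<le> b'" "0 < a"
  shows "s = 0 \<or> b' = b"
proof (cases "s = 0")
  case True thus ?thesis by simp
next
  case False
  have bb: "-a \<le> b" "b \<le> a" "-a \<le> b'" "b' \<le> a" using assms(4,6) by auto
  show ?thesis
  proof (cases "s \<ge> 1")
    case True
    hence "t \<ge> a" using assms(2) by simp
    hence "b = -a" using bb assms(1) by simp
    hence "\<bar>b\<bar> = a" using assms(8) by simp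
    hence "b \<ge> 0" using assms(5) by simp
    thus ?thesis using \<open>b = -a\<close> assms(8) by simp
  next
    case False2: False
    hence "s \<le> -1" using False by simp
    hence "t \<le> -a" using assms(3) by simp
    hence "b' = -a" using bb assms(1) by simp
    hence "\<bar>b'\<bar> = a" using assms(8) by simp
    hence "b' \<ge> 0" using assms(7) by simp
    thus ?thesis using \<open>b' = -a\<close> assms(8) by simp
  qed
qed

lemma gen_lem2:
  fixes a b b' s t :: int
  assumes "b' = -b + 2*t" "s \<ge> 1 \<Longrightarrow> t \<ge> a" "s \<le> -1 \<Longrightarrow> t \<le> -a"
    "\<bar>b\<bar> \<le> a" "\<bar>b'\<bar> \<le> a" "\<bar>b'\<bar> = a \<or> a = c' \<longrightarrow> 0 \<le> b'" "0 < a"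
  shows "s = 0 \<or> b' = b"
proof (cases "s = 0")
  case True thus ?thesis by simp
next
  case False
  have bb: "-a \<le> b" "b \<le> a" "-a \<le> b'" "b' \<le> a" using assms(4,5) by auto
  show ?thesis
  proof (cases "s \<ge> 1")
    case True
    hence "t \<ge> a" using assms(2) by simp
    hence "b = a" "b' = a" using bb assms(1) by simp_all
    thus ?thesis by simp
  next
    case False2: False
    hence "s \<le> -1" using False by simp
    hence "t \<le> -a" using assms(3) by simp
    hence "b' = -a" using bb assms(1) by simp
    hence "\<bar>b'\<bar> = a" using assms(7) by simp
    hence "b' \<ge> 0" using assms(6) by simp
    thus ?thesis using \<open>b' = -a\<close> assms(7) by simp
  qed
qed

lemma det_mul:
  fixes a1 b1 c1 d1 a2 b2 c2 d2 :: int
  shows "(a1*a2+b1*c2)*(c1*b2+d1*d2) - (a1*b2+b1*d2)*(c1*a2+d1*c2) = (a1*d1-b1*c1)*(a2*d2-b2*c2)"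
  by (simp add: algebra_simps)

lemma subst_inv:
  fixes v1 v2 v3 v4 :: int
  assumes "v1*v4 - v2*v3 = 1"
  shows "subst (subst f v1 v2 v3 v4) v4 (-v2) (-v3) v1 = f"
proof -
  have e: "v1*v4 = 1 + v2*v3" using assms by simp
  have "subst (subst f v1 v2 v3 v4) v4 (-v2) (-v3) v1 = subst f 1 0 0 1"
    unfolding subst_comp using e by (simp add: algebra_simps)
  thus ?thesis by (simp add: subst_id)
qed

lemma derived_elim:
  assumes "derived_from f g s"
  shows "\<exists>al be ga de. al*de - be*ga = s \<and> f = subst g al be ga de"
proof -
  obtain g0 u1 u2 u3 u4 n1 n2 n3 n4 w1 w2 w3 w4 where
    u: "u1*u4 - u2*u3 = 1" "subst g u1 u2 u3 u4 = g0" and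
    n: "n1*n4 - n2*n3 = s" and w: "w1*w4-w2*w3 = 1" "subst (subst g0 n1 n2 n3 n4) w1 w2 w3 w4 = f"
    using assms unfolding derived_from_def equiv_bqf_def by blast
  define x1 where "x1 = u1*n1+u2*n3"
  define x2 where "x2 = u1*n2+u2*n4"
  define x3 where "x3 = u3*n1+u4*n3"
  define x4 where "x4 = u3*n2+u4*n4"
  have d1: "x1*x4 - x2*x3 = s" unfolding x1_def x2_def x3_def x4_def
    using det_mul[of u1 n1 u2 n3 u3 n2 u4 n4] u(1) n by simp
  have "f = subst (subst (subst g u1 u2 u3 u4) n1 n2 n3 n4) w1 w2 w3 w4" using w(2) u(2) by simp
  hence "f = subst g (x1*w1+x2*w3) (x1*w2+x2*w4) (x3*w1+x4*w3) (x3*w2+x4*w4)"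
    by (simp only: subst_comp x1_def x2_def x3_def x4_def)
  moreover have "(x1*w1+x2*w3)*(x3*w2+x4*w4) - (x1*w2+x2*w4)*(x3*w1+x4*w3) = s"
    using det_mul[of x1 w1 x2 w3 x3 w2 x4 w4] d1 w(1) by simp
  ultimately show ?thesis by blast
qed

lemma hermite:
  fixes al be ga de s :: int
  assumes "al*de - be*ga = s" "s \<noteq> 0"
  shows "\<exists>v1 v2 v3 v4 p q g. v1*v4 - v2*v3 = 1 \<and> g > 0 \<and> p*g = s \<and>
     subst (subst G al be ga de) v1 v2 v3 v4 = subst G p q 0 g"
proof -
  define g where "g = gcd ga de"
  have gnz: "g \<noteq> 0" using assms unfolding g_def by auto
  hence gp: "g > 0" unfolding g_def by (metis gcd_ge_0_int order_le_less)
  obtain u v where uv: "u*ga + v*de = g" using bezout_int[of ga de] unfolding g_def by blast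
  obtain ga' where ga': "ga = g*ga'" unfolding g_def by (meson gcd_dvd1 dvdE)
  obtain de' where de': "de = g*de'" unfolding g_def by (meson gcd_dvd2 dvdE)
  have "g*(de'*v + u*ga') = g*1" using uv ga' de' by (simp add: algebra_simps)
  hence dv: "de'*v - u*(-ga') = 1" using gnz by simp
  have z: "ga*de' + de*(-ga') = 0" using ga' de' by simp
  have gg: "ga*u + de*v = g" using uv by (simp add: algebra_simps)
  define p where "p = al*de' + be*(-ga')"
  define q where "q = al*u + be*v"
  have "p*g - q*0 = s*1"
    using det_mul[of al de' be "-ga'" ga u de v] assms(1) dv z gg unfolding p_def q_def by simp
  hence "p*g = s" by simp
  moreover have "subst (subst G al be ga de) de' u (-ga') v = subst G p q 0 g"
    unfolding subst_comp p_def q_def using z gg by simp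
  ultimately show ?thesis using dv gp by blast
qed

lemma reduced_unique:
  fixes a b c a' b' c' al be ga de :: int
  assumes rf: "reduced (a,b,c)" and rh: "reduced (a',b',c')" and ap: "0 < a"
    and det: "al*de - be*ga = 1"
    and hs: "subst (a,b,c) al be ga de = (a',b',c')"
  shows "(a',b',c') = (a,b,c)"
proof -
  have r1: "\<bar>b\<bar> \<le> a" "a \<le> c" "(\<bar>b\<bar> = a \<or> a = c) \<longrightarrow> b \<ge> 0"
    using rf by (auto simp: reduced_def)
  have r2: "\<bar>b'\<bar> \<le> a'" "a' \<le> c'" "(\<bar>b'\<bar> = a' \<or> a' = c') \<longrightarrow> b' \<ge> 0"
    using rh by (auto simp: reduced_def)
  have ea: "a' = a*al^2 + b*al*ga + c*ga^2"
   and eb: "b' = 2*a*al*be + b*(al*de+be*ga) + 2*c*ga*de"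
   and ec: "c' = a*be^2 + b*be*de + c*de^2"
  proof -
    have "(a',b',c') = (a*al^2 + b*al*ga + c*ga^2, 2*a*al*be + b*(al*de+be*ga) + 2*c*ga*de, a*be^2 + b*be*de + c*de^2)"
      using hs[symmetric] by (simp only: subst_def prod.case)
    thus "a' = a*al^2 + b*al*ga + c*ga^2" "b' = 2*a*al*be + b*(al*de+be*ga) + 2*c*ga*de" "c' = a*be^2 + b*be*de + c*de^2"
      by (simp_all only: prod.inject)
  qed
  have "disc (a',b',c') = disc (a,b,c)"
    using disc_subst[of "(a,b,c)" al be ga de] det unfolding hs by simp
  hence dd: "b'^2 - 4*a'*c' = b^2 - 4*a*c" by (simp add: disc_def)
  have "(al,ga) \<noteq> (0,0)" using det by auto
  from lb_gen[OF r1(1,2) ap this] have a1: "a' \<ge> a" unfolding ea .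
  hence ap': "a' > 0" using ap by simp
  have "subst (a',b',c') de (-be) (-ga) al = subst (a,b,c) 1 0 0 1"
    unfolding hs[symmetric] subst_comp
  proof -
    have "al*de = 1 + be*ga" using det by simp
    thus "subst (a, b, c) (al * de + be * - ga) (al * - be + be * al) (ga * de + de * - ga) (ga * - be + de * al) =
      subst (a, b, c) 1 0 0 1" by (simp add: algebra_simps)
  qed
  hence "subst (a',b',c') de (-be) (-ga) al = (a,b,c)" by (simp add: subst_id)
  hence ea2: "a = a'*de^2 + b'*de*(-ga) + c'*(-ga)^2" by (simp only: subst_def prod.case prod.inject)
  have "(de,-ga) \<noteq> (0,0)" using det by auto
  from lb_gen[OF r2(1,2) ap' this] ea2 have "a \<ge> a'" by simp
  with a1 have aa: "a' = a" by simp
  have bb: "b' = b"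
  proof (cases "ga = 0")
    case True
    hence "al*de = 1" using det by simp
    hence "al = de" "al*al = 1" using zmult_eq_1_iff by auto
    hence "b' = b + 2*(a*(al*be))" using eb True by (simp add: algebra_simps)
    moreover have "al*be \<ge> 1 \<Longrightarrow> a*(al*be) \<ge> a" using ap mul_ge[of a "al*be"] by simp
    moreover have "al*be \<le> -1 \<Longrightarrow> a*(al*be) \<le> -a" using ap mul_le[of a "al*be"] by simp
    ultimately have "al*be = 0 \<or> b' = b" using r1 r2 aa ap
      by (intro gen_lem[where c=c and c'=c' and t="a*(al*be)"]) auto
    thus ?thesis using \<open>b' = b + 2*(a*(al*be))\<close> by auto
  next
    case gnz: False
    show ?thesis
    proof (cases "al = 0")
      case True
      hence bg: "be*ga = -1" using det by simp
      have "ga^2 \<ge> 1" using gnz by (rule sq_ge1)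
      hence "c*ga^2 \<ge> c" using r1 ap by (intro mul_ge) auto
      hence ca: "c = a" using ea True aa r1 by simp
      have ebs: "b' = -b + 2*(a*(ga*de))" using eb True bg ca by (simp add: algebra_simps)
      have m1: "ga*de \<ge> 1 \<Longrightarrow> a*(ga*de) \<ge> a" using ap mul_ge[of a "ga*de"] by simp
      have m2: "ga*de \<le> -1 \<Longrightarrow> a*(ga*de) \<le> -a" using ap mul_le[of a "ga*de"] by simp
      show ?thesis
      proof (cases "ga*de = 0")
        case True
        hence "b' = -b" using ebs by simp
        hence "b'^2 = b^2" by simp
        hence "4*a*c' = 4*a*c" using dd aa by simp
        hence "c' = c" using ap by simp
        thus ?thesis using r1 r2 aa ca \<open>b' = -b\<close> by auto
      next
        case False
        have "ga*de = 0 \<or> b' = b" using m1 m2 ebs r1 r2 aa ca ap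
          by (intro gen_lem2[where b=b and b'=b' and c'=c' and t="a*(ga*de)"]) auto
        then show ?thesis using False by auto
      qed
    next
      case False
      have "a' \<ge> a - \<bar>b\<bar> + c" using lb_both[OF r1(1,2) False gnz] unfolding ea .
      hence "\<bar>b\<bar> = a" "c = a" using aa r1 by auto
      hence bA: "b = a" using r1 by auto
      hence "b'^2 - 4*a*c' = -3*a^2" using dd aa \<open>c = a\<close> by (simp add: power2_eq_square)
      moreover have "b'^2 \<le> a^2" using r2 aa ap by (simp add: abs_le_square_iff[symmetric])
      ultimately have "4*a*c' \<le> 4*a*a" by (simp add: power2_eq_square)
      hence "c' \<le> a" using ap by simp
      hence "c' = a" using r2 aa by simp
      hence "b'^2 = a^2" using \<open>b'^2 - 4*a*c' = -3*a^2\<close> by (simp add: power2_eq_square)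
      hence "\<bar>b'\<bar> = \<bar>a\<bar>" using abs_le_square_iff[of b' a] abs_le_square_iff[of a b'] by simp
      hence "\<bar>b'\<bar> = a" using ap by simp
      thus ?thesis using r2 aa bA by auto
    qed
  qed
  have "4*a*c' = 4*a*c" using dd aa bb by simp
  hence "c' = c" using ap by simp
  thus ?thesis using aa bb by simp
qed



theorem propositionA2:
  fixes a b a2 :: int and f :: bqf
  assumes "a > 0" and "b > 0"
    and "reduced f" and "primitive f" and "pos_def f"
    and "disc f = -4*a^2*b"
    and "derived_from f (1, 0, b) a"
    and "\<not> equiv_bqf f (1, 0, a^2*b)"
    and "a2 > 0" and "a2 dvd a"
    and "derived_from f (1, 0, (a div a2)^2*b) a2"
    and "\<forall>a2'. a2' > 0 \<and> a2' dvd a \<and> derived_from f (1, 0, (a div a2')^2*b) a2'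
            \<longrightarrow> (a div a2')^2*b \<le> (a div a2)^2*b"
    and "(a div a2)^2*b > a2^2"
  shows "\<exists>k::int. f = (a2^2, 2*a2*k, k^2 + (a div a2)^2*b) \<and> -a2 \<le> 2*k \<and> 2*k \<le> a2"
proof -
  define m where "m = a div a2"
  define B where "B = m^2*b"
  have am: "a = a2*m" unfolding m_def using assms(10) by simp
  have mp: "m > 0" using am assms(1,9) by (simp add: zero_less_mult_iff)
  have "(1::int, 0::int, (a div a2)^2*b) = (1,0,B)" unfolding B_def m_def by simp
  then obtain al be ga de where M: "al*de - be*ga = a2" "f = subst (1,0,B) al be ga de"
    using derived_elim[OF assms(11)] by metis
  obtain v1 v2 v3 v4 p q g where V: "v1*v4 - v2*v3 = 1" "g > 0" "p*g = a2"
    "subst (subst (1,0,B) al be ga de) v1 v2 v3 v4 = subst (1,0,B) p q 0 g"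
    using hermite[OF M(1), of "(1,0,B)"] assms(9) by (metis less_irrefl)
  have hV: "subst f v1 v2 v3 v4 = (p^2, 2*p*q, q^2 + B*g^2)"
    using V(4) M(2) by (simp add: subst_def power2_eq_square)
  have "0 < p*g" using V(3) assms(9) by simp
  hence pp: "p > 0" using V(2) by (auto simp: zero_less_mult_iff)
  have pdvd: "p dvd a" using V(3) assms(10) by (metis dvd_mult_left)
  have apg: "a = p*(g*m)" using am V(3) by (simp add: algebra_simps)
  hence adp: "a div p = g*m" using pp by simp
  have der: "derived_from f (1, 0, (a div p)^2*b) p"
    unfolding derived_from_def
  proof (intro exI conjI)
    show "equiv_bqf (1, 0, (a div p)^2*b) (1, 0, (a div p)^2*b)"
      unfolding equiv_bqf_def
      by (intro exI[of _ 1] exI[of _ 0] exI[of _ 0] exI[of _ 1]) (simp add: subst_id)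
    show "p*1 - q*0 = p" by simp
    have "subst (1, 0, (a div p)^2*b) p q 0 1 = (p^2, 2*p*q, q^2 + B*g^2)"
      unfolding adp B_def by (simp add: subst_def power2_eq_square algebra_simps)
    also have "\<dots> = subst f v1 v2 v3 v4" using hV by simp
    finally have e: "subst (1, 0, (a div p)^2*b) p q 0 1 = subst f v1 v2 v3 v4" .
    show "equiv_bqf (subst (1, 0, (a div p)^2*b) p q 0 1) f"
      unfolding equiv_bqf_def e
      using subst_inv[OF V(1), of f] V(1) by (intro exI[of _ v4] exI[of _ "-v2"] exI[of _ "-v3"] exI[of _ v1]) (simp add: algebra_simps)
  qed
  have "(a div p)^2*b \<le> (a div a2)^2*b" using assms(12) pp pdvd der by blast
  hence "(g*m)^2*b \<le> m^2*b" unfolding adp m_def by simp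
  hence "(g*g)*(m*m*b) \<le> 1*(m*m*b)" by (simp add: power2_eq_square algebra_simps)
  moreover have "m*m*b > 0" using mp assms(2) by simp
  ultimately have "g*g \<le> 1" by (meson mult_le_cancel_right_pos)
  moreover have "g \<ge> 2 \<Longrightarrow> g*g \<ge> 2*g" by (simp add: mult_right_mono)
  ultimately have g1: "g = 1" using V(2) by linarith
  hence pa: "p = a2" using V(3) by simp
  have hV2: "subst f v1 v2 v3 v4 = (a2^2, 2*a2*q, q^2 + B)" using hV g1 pa by simp
  define r where "r = q mod a2"
  have r: "0 \<le> r" "r < a2" unfolding r_def using assms(9) by auto
  define k where "k = (if 2*r \<le> a2 then r else r - a2)"
  define t where "t = (if 2*r \<le> a2 then q div a2 else q div a2 + 1)"
  have qk: "q = k + a2*t" unfolding k_def t_def r_def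
    by (simp add: algebra_simps)
  have kb: "-a2 < 2*k" "2*k \<le> a2" unfolding k_def using r by auto
  have hT: "subst (subst f v1 v2 v3 v4) 1 (-t) 0 1 = (a2^2, 2*a2*k, k^2 + B)"
    unfolding hV2 qk by (simp add: subst_def power2_eq_square algebra_simps)
  have hC: "subst (subst f v1 v2 v3 v4) 1 (-t) 0 1 = subst f v1 (v1*(-t)+v2) v3 (v3*(-t)+v4)"
    by (simp add: subst_comp)
  have dC: "v1*(v3*(-t)+v4) - (v1*(-t)+v2)*v3 = 1" using V(1) by (simp add: algebra_simps)
  obtain fa fb fc where fe: "f = (fa,fb,fc)" by (cases f) auto
  have fap: "fa > 0" using assms(5) fe by (simp add: pos_def_def)
  have absk: "\<bar>2*a2*k\<bar> = a2*\<bar>2*k\<bar>" using assms(9) by (simp add: abs_mult)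
  have "a2*\<bar>2*k\<bar> \<le> a2*a2" using kb assms(9) by (intro mult_left_mono) auto
  hence c1: "\<bar>2*a2*k\<bar> \<le> a2^2" using absk by (simp add: power2_eq_square)
  have Bg: "B > a2^2" using assms(13) unfolding B_def m_def .
  have c2: "a2^2 \<le> k^2 + B" using Bg by (smt (verit) zero_le_power2)
  have c3: "\<bar>2*a2*k\<bar> = a2^2 \<longrightarrow> 2*a2*k \<ge> 0"
  proof
    assume "\<bar>2*a2*k\<bar> = a2^2"
    hence "a2*\<bar>2*k\<bar> = a2*a2" using absk by (simp add: power2_eq_square)
    hence "\<bar>2*k\<bar> = a2" using assms(9) by simp
    hence "2*k = a2" using kb by linarith
    thus "2*a2*k \<ge> 0" using assms(9) by (simp add: mult.assoc)
  qed
  have redh: "reduced (a2^2, 2*a2*k, k^2 + B)" unfolding reduced_def using c1 c2 c3 Bg by auto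
  have "(a2^2, 2*a2*k, k^2 + B) = (fa,fb,fc)"
    using reduced_unique[OF assms(3)[unfolded fe] redh fap dC] hT hC fe by simp
  hence "f = (a2^2, 2*a2*k, k^2 + (a div a2)^2*b)" using fe unfolding B_def m_def by simp
  thus ?thesis using kb by (intro exI[of _ k]) auto
qed

end
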